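(* Let $k\geq 3$, $A=\{0,1,\dots,k-1\}$, $n=k-1$, let $T\colon A^{n^2}\to A$ be defined by $T(x_{1,1},\dots,x_{1,n},\dots,x_{n,1},\dots,x_{n,n})=1$ if $x_{i,j}=i$ for all $i,j\in\{1,\dots,n\}$ or $x_{i,j}=j$ for all $i,j\in\{1,\dots,n\}$, and $0$ otherwise, and let $f\colon A^{n}\to A$ be given by $f(\mathbf{x})=1$ if $\mathbf{x}\in\{(1,2,\dots,n),(n,\dots,2,1)\}$ and $f(\mathbf{x})=0$ otherwise. Then $f\in\{T\}^{**}\setminus\langle\{T\}\rangle$.
   Context: $\mathrm{Op}(A)$ denotes the set of all finitary operations $A^m\to A$ with $m\geq1$. An $m$-ary $g$ commutes with an $n$-ary $h$ if for every matrix $(x_{ij})\in A^{m\times n}$, $g\bigl((h((x_{ij})_{j}))_{i}\bigr)=h\bigl((g((x_{ij})_{i}))_{j}\bigr)$. For $F\subseteq\mathrm{Op}(A)$, the centraliser $F^*$ is the set of all $g\in\mathrm{Op}(A)$ commuting with every member of $F$, and $F^{**}=(F^* )^*$ is the bicentraliser. $\langle F\rangle$ denotes the clone generated by $F$ (all term operations of positive arity of the algebra $(A;F)$, including projections). *)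

theory Defs
  imports Main
begin

text \<open>A finitary operation on a carrier A is represented as a pair (m, g): its arity m
  and a function g on lists; only the values of g on lists of length m with entries
  in A are relevant.\<close>
type_synonym op = "nat \<times> (nat list \<Rightarrow> nat)"

definition is_op :: "nat set \<Rightarrow> op \<Rightarrow> bool" where
  "is_op A f \<longleftrightarrow> fst f \<ge> 1 \<and>
     (\<forall>xs. length xs = fst f \<and> set xs \<subseteq> A \<longrightarrow> snd f xs \<in> A)"

definition commutes :: "nat set \<Rightarrow> op \<Rightarrow> op \<Rightarrow> bool" where
  "commutes A gg hh \<longleftrightarrow> (let m = fst gg; g = snd gg; n = fst hh; h = snd hh in
     \<forall>x :: nat \<Rightarrow> nat \<Rightarrow> nat. (\<forall>i<m. \<forall>j<n. x i j \<in> A) \<longrightarrow>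
       g (map (\<lambda>i. h (map (\<lambda>j. x i j) [0..<n])) [0..<m])
       = h (map (\<lambda>j. g (map (\<lambda>i. x i j) [0..<m])) [0..<n]))"

definition centraliser :: "nat set \<Rightarrow> op set \<Rightarrow> op set" where
  "centraliser A F = {g. is_op A g \<and> (\<forall>h\<in>F. commutes A g h)}"

inductive_set clone_terms :: "nat set \<Rightarrow> op set \<Rightarrow> op set" for A F where
  proj: "1 \<le> m \<Longrightarrow> i < m \<Longrightarrow> (m, \<lambda>xs. xs ! i) \<in> clone_terms A F"
| base: "f \<in> F \<Longrightarrow> f \<in> clone_terms A F"
| comp: "(n, h) \<in> clone_terms A F \<Longrightarrow> length gs = n \<Longrightarrow> 1 \<le> m \<Longrightarrow>
         (\<forall>g\<in>set gs. (m, g) \<in> clone_terms A F) \<Longrightarrow>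
         (m, \<lambda>xs. h (map (\<lambda>g. g xs) gs)) \<in> clone_terms A F"

definition in_clone :: "nat set \<Rightarrow> op \<Rightarrow> op set \<Rightarrow> bool" where
  "in_clone A f F \<longleftrightarrow> is_op A f \<and> (\<exists>g. (fst f, g) \<in> clone_terms A F \<and>
     (\<forall>xs. length xs = fst f \<and> set xs \<subseteq> A \<longrightarrow> snd f xs = g xs))"

text \<open>T : A^(n^2) -> A, argument x_{i,j} (1-based) stored at position (i-1)*n + (j-1).\<close>
definition opT :: "nat \<Rightarrow> op" where
  "opT n = (n * n, \<lambda>xs.
     if (\<forall>i<n. \<forall>j<n. xs ! (i * n + j) = i + 1) \<or> (\<forall>i<n. \<forall>j<n. xs ! (i * n + j) = j + 1)
     then 1 else 0)"

definition opf :: "nat \<Rightarrow> op" where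
  "opf n = (n, \<lambda>xs. if xs = [1..<n+1] \<or> xs = rev [1..<n+1] then 1 else 0)"

end

theory Submission
  imports Defs
begin

definition pat :: "nat \<Rightarrow> (nat \<Rightarrow> nat \<Rightarrow> nat) \<Rightarrow> bool" where
  "pat n F \<longleftrightarrow> (\<forall>a<n. \<forall>b<n. F a b = a + 1) \<or> (\<forall>a<n. \<forall>b<n. F a b = b + 1)"

definition Tv :: "nat \<Rightarrow> (nat \<Rightarrow> nat \<Rightarrow> nat) \<Rightarrow> nat" where
  "Tv n F = (if pat n F then 1 else 0)"

lemma idx_lt: "a < (n::nat) \<Longrightarrow> b < n \<Longrightarrow> a * n + b < n * n"
proof -
  assume "a < n" "b < n"
  then have "a * n + b < (a + 1) * n" by simp
  also have "\<dots> \<le> n * n" using \<open>a < n\<close> by (intro mult_right_mono) auto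
  finally show ?thesis .
qed

lemma T_map:
  "snd (opT n) (map (\<lambda>j. F (j div n) (j mod n)) [0..<n*n]) = Tv n F"
proof -
  have "\<And>a b. a < n \<Longrightarrow> b < n \<Longrightarrow>
      (map (\<lambda>j. F (j div n) (j mod n)) [0..<n*n]) ! (a * n + b) = F a b"
    using idx_lt by simp
  then show ?thesis unfolding opT_def Tv_def pat_def by simp
qed

lemma inst:
  assumes c: "commutes A g (opT n)" and n: "n > 0"
    and X: "\<And>i a b. i < fst g \<Longrightarrow> a < n \<Longrightarrow> b < n \<Longrightarrow> X i a b \<in> A"
  shows "snd g (map (\<lambda>i. Tv n (X i)) [0..<fst g])
       = Tv n (\<lambda>a b. snd g (map (\<lambda>i. X i a b) [0..<fst g]))"
proof -
  define x where "x = (\<lambda>i j. X i (j div n) (j mod n))"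
  have prem: "\<forall>i<fst g. \<forall>j<fst (opT n). x i j \<in> A"
    unfolding x_def opT_def using X n
    by (simp add: less_mult_imp_div_less)
  have "snd g (map (\<lambda>i. snd (opT n) (map (\<lambda>j. x i j) [0..<fst (opT n)])) [0..<fst g])
     = snd (opT n) (map (\<lambda>j. snd g (map (\<lambda>i. x i j) [0..<fst g])) [0..<fst (opT n)])"
    using c prem unfolding commutes_def Let_def by blast
  moreover have "fst (opT n) = n * n" by (simp add: opT_def)
  moreover have "\<And>i. snd (opT n) (map (\<lambda>j. X i (j div n) (j mod n)) [0..<n*n]) = Tv n (X i)"
    using T_map[of n] by blast
  moreover have "snd (opT n) (map (\<lambda>j. snd g (map (\<lambda>i. X i (j div n) (j mod n)) [0..<fst g])) [0..<n*n])
     = Tv n (\<lambda>a b. snd g (map (\<lambda>i. X i a b) [0..<fst g]))"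
    using T_map[of n "\<lambda>a b. snd g (map (\<lambda>i. X i a b) [0..<fst g])"] by simp
  ultimately show ?thesis unfolding x_def by simp
qed

lemma pat_row:
  assumes "n \<ge> 2" shows "pat n (\<lambda>a b. h a) \<longleftrightarrow> (\<forall>a<n. h a = a + 1)"
  using assms unfolding pat_def by force

lemma pat_col:
  assumes "n \<ge> 2" shows "pat n (\<lambda>a b. h b) \<longleftrightarrow> (\<forall>b<n. h b = b + 1)"
  using assms unfolding pat_def by force

lemma Tv_row: "n \<ge> 2 \<Longrightarrow> Tv n (\<lambda>a b. h a) = (if \<forall>a<n. h a = a + 1 then 1 else 0)"
  by (simp add: Tv_def pat_row)

lemma Tv_const: assumes "n \<ge> 2" shows "Tv n (\<lambda>a b. c) = 0"
proof -
  have "\<not> pat n (\<lambda>a b. c)"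
  proof
    assume "pat n (\<lambda>a b. c)"
    then consider "\<forall>a<n. \<forall>b<n. c = a + 1" | "\<forall>a<n. \<forall>b<n. c = b + 1"
      unfolding pat_def by blast
    then show False
    proof cases
      case 1
      have h: "0 < n" "1 < n" using assms by auto
      have "c = 0 + 1" using 1 h by blast
      moreover have "c = 1 + 1" using 1 h by blast
      ultimately show False by simp
    next
      case 2
      have h: "0 < n" "1 < n" using assms by auto
      have "c = 0 + 1" using 2 h by blast
      moreover have "c = 1 + 1" using 2 h by blast
      ultimately show False by simp
    qed
  qed
  then show ?thesis by (simp add: Tv_def)
qed

lemma Tv_P1: "Tv n (\<lambda>a b. a + 1) = 1" by (simp add: Tv_def pat_def)
lemma Tv_P2: "Tv n (\<lambda>a b. b + 1) = 1" by (simp add: Tv_def pat_def)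
lemma Tv_P1': "Tv n (\<lambda>a b. Suc a) = 1" by (simp add: Tv_def pat_def)
lemma Tv_P2': "Tv n (\<lambda>a b. Suc b) = 1" by (simp add: Tv_def pat_def)

lemma map_I: "map F [0..<n] = [1..<n+1] \<longleftrightarrow> (\<forall>a<n. F a = a + 1)"
  by (auto simp: list_eq_iff_nth_eq simp del: upt_Suc)

lemma map_R: "map F [0..<n] = rev [1..<n+1] \<longleftrightarrow> (\<forall>a<n. F a = n - a)"
  by (auto simp: list_eq_iff_nth_eq rev_nth simp del: upt_Suc)


lemma rev_idx:
  "(\<forall>a<n. h (n - 1 - a) = a + (1::nat)) \<longleftrightarrow> (\<forall>a<n. h a = n - a)"
proof
  assume H: "\<forall>a<n. h (n - 1 - a) = a + 1"
  show "\<forall>a<n. h a = n - a"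
  proof (intro allI impI)
    fix a assume "a < n"
    have l: "n - 1 - a < n" using \<open>a < n\<close> by arith
    have e1: "n - 1 - (n - 1 - a) = a" using \<open>a < n\<close> by arith
    have e2: "n - 1 - a + 1 = n - a" using \<open>a < n\<close> by arith
    have "h (n - 1 - (n - 1 - a)) = n - 1 - a + 1" using H l by blast
    then show "h a = n - a" using e1 e2 by simp
  qed
next
  assume H: "\<forall>a<n. h a = n - a"
  show "\<forall>a<n. h (n - 1 - a) = a + 1"
  proof (intro allI impI)
    fix a assume "a < n"
    have l: "n - 1 - a < n" using \<open>a < n\<close> by arith
    have e2: "n - (n - 1 - a) = a + 1" using \<open>a < n\<close> by arith
    show "h (n - 1 - a) = a + 1" using H l e2 by metis
  qed
qed


lemma lemE:
  assumes c: "commutes {0..<Suc n} g (opT n)" and n2: "n \<ge> 2"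
    and h: "snd g (map (\<lambda>i. if U i then 1 else 0) [0..<fst g]) = 1"
  shows "snd g (map (\<lambda>i. if U i \<or> W i then 1 else 0) [0..<fst g]) = 1"
proof -
  define X where "X = (\<lambda>i (a::nat) (b::nat). if U i then a + 1 else if W i then 1 else (0::nat))"
  have XA: "\<And>i a b. i < fst g \<Longrightarrow> a < n \<Longrightarrow> b < n \<Longrightarrow> X i a b \<in> {0..<Suc n}"
    unfolding X_def using n2 by auto
  have eq: "snd g (map (\<lambda>i. Tv n (X i)) [0..<fst g])
       = Tv n (\<lambda>a b. snd g (map (\<lambda>i. X i a b) [0..<fst g]))"
    using inst[OF c _ XA] n2 by simp
  have "\<And>i. Tv n (X i) = (if U i then 1 else 0)"
    unfolding X_def using n2 by (auto simp: Tv_P1' Tv_const)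
  then have "Tv n (\<lambda>a b. snd g (map (\<lambda>i. X i a b) [0..<fst g])) = 1"
    using eq h by simp
  then have "\<forall>a<n. snd g (map (\<lambda>i. X i a 0) [0..<fst g]) = a + 1"
    using n2 unfolding X_def by (simp add: Tv_row split: if_splits)
  then have "snd g (map (\<lambda>i. X i 0 0) [0..<fst g]) = 1" using n2 by auto
  moreover have "map (\<lambda>i. X i 0 0) [0..<fst g] = map (\<lambda>i. if U i \<or> W i then 1 else 0) [0..<fst g]"
    unfolding X_def by auto
  ultimately show ?thesis by simp
qed

lemma lemD:
  assumes c: "commutes {0..<Suc n} g (opT n)" and n2: "n \<ge> 2"
    and hU: "snd g (map (\<lambda>i. if U i then 1 else 0) [0..<fst g]) = 0"
    and hW: "snd g (map (\<lambda>i. if W i then 1 else 0) [0..<fst g]) = 0"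
    and dj: "\<And>i. \<not> (U i \<and> W i)"
  shows "snd g (map (\<lambda>i. if U i \<or> W i then 1 else 0) [0..<fst g]) = 0"
proof (rule ccontr)
  assume ne: "snd g (map (\<lambda>i. if U i \<or> W i then 1 else 0) [0..<fst g]) \<noteq> 0"
  define V where "V = (\<lambda>p q. map (\<lambda>i. if U i then p else if W i then q else (0::nat)) [0..<fst g])"
  define X where "X = (\<lambda>i (a::nat) (b::nat). if U i then a + 1 else if W i then b + 1 else (0::nat))"
  have XA: "\<And>i a b. i < fst g \<Longrightarrow> a < n \<Longrightarrow> b < n \<Longrightarrow> X i a b \<in> {0..<Suc n}"
    unfolding X_def using n2 by auto
  have eq: "snd g (map (\<lambda>i. Tv n (X i)) [0..<fst g])
       = Tv n (\<lambda>a b. snd g (map (\<lambda>i. X i a b) [0..<fst g]))"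
    using inst[OF c _ XA] n2 by simp
  have "\<And>i. Tv n (X i) = (if U i \<or> W i then 1 else 0)"
  proof -
    fix i
    show "Tv n (X i) = (if U i \<or> W i then 1 else 0)"
    proof (cases "U i")
      case True then show ?thesis unfolding X_def by (simp add: Tv_P1')
    next
      case False then show ?thesis unfolding X_def using n2 by (cases "W i") (simp_all add: Tv_P2' Tv_const)
    qed
  qed
  then have "Tv n (\<lambda>a b. snd g (V (a+1) (b+1))) \<noteq> 0"
    using eq ne unfolding V_def X_def by simp
  then have "pat n (\<lambda>a b. snd g (V (a+1) (b+1)))" by (simp add: Tv_def split: if_splits)
  then consider "\<forall>a<n. \<forall>b<n. snd g (V (a+1) (b+1)) = a + 1"
    | "\<forall>a<n. \<forall>b<n. snd g (V (a+1) (b+1)) = b + 1" unfolding pat_def by blast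
  then show False
  proof cases
    case 1
    define Y where "Y = (\<lambda>i (a::nat) (b::nat). if U i then a + 1 else if W i then 1 else (0::nat))"
    have YA: "\<And>i a b. i < fst g \<Longrightarrow> a < n \<Longrightarrow> b < n \<Longrightarrow> Y i a b \<in> {0..<Suc n}"
      unfolding Y_def using n2 by auto
    have eq: "snd g (map (\<lambda>i. Tv n (Y i)) [0..<fst g])
       = Tv n (\<lambda>a b. snd g (map (\<lambda>i. Y i a b) [0..<fst g]))"
      using inst[OF c _ YA] n2 by simp
    have "\<And>i. Tv n (Y i) = (if U i then 1 else 0)"
      unfolding Y_def using n2 by (auto simp: Tv_P1' Tv_const)
    then have "Tv n (\<lambda>a b. snd g (V (a+1) 1)) = 0"
      using eq hU unfolding V_def Y_def by simp
    moreover have "\<forall>a<n. snd g (V (a+1) (0+1)) = a + 1" using 1 n2 by auto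
    ultimately show False using n2 by (simp add: Tv_row)
  next
    case 2
    define Y where "Y = (\<lambda>i (a::nat) (b::nat). if U i then 1 else if W i then b + 1 else (0::nat))"
    have YA: "\<And>i a b. i < fst g \<Longrightarrow> a < n \<Longrightarrow> b < n \<Longrightarrow> Y i a b \<in> {0..<Suc n}"
      unfolding Y_def using n2 by auto
    have eq: "snd g (map (\<lambda>i. Tv n (Y i)) [0..<fst g])
       = Tv n (\<lambda>a b. snd g (map (\<lambda>i. Y i a b) [0..<fst g]))"
      using inst[OF c _ YA] n2 by simp
    have "\<And>i. Tv n (Y i) = (if W i then 1 else 0)"
    proof -
      fix i
      show "Tv n (Y i) = (if W i then 1 else 0)"
      proof (cases "W i")
        case True then have "\<not> U i" using dj by blast
        then show ?thesis unfolding Y_def using True by (simp add: Tv_P2')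
      next
        case False then show ?thesis unfolding Y_def using n2 by (cases "U i") (simp_all add: Tv_const)
      qed
    qed
    then have "Tv n (\<lambda>a b. snd g (V 1 (b+1))) = 0"
      using eq hW unfolding V_def Y_def by simp
    moreover have "\<forall>b<n. snd g (V (0+1) (b+1)) = b + 1" using 2 n2 by auto
    ultimately show False using n2 by (simp add: Tv_def pat_col)
  qed
qed


lemma comm_f:
  assumes n2: "n \<ge> 2" and c: "commutes {0..<Suc n} g (opT n)"
  shows "commutes {0..<Suc n} (opf n) g"
  unfolding commutes_def Let_def
proof (intro allI impI)
  fix x :: "nat \<Rightarrow> nat \<Rightarrow> nat"
  assume xA: "\<forall>i<fst (opf n). \<forall>j<fst g. x i j \<in> {0..<Suc n}"
  then have xA': "\<And>i j. i < n \<Longrightarrow> j < fst g \<Longrightarrow> x i j \<in> {0..<Suc n}"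
    by (simp add: opf_def)
  define G where "G = snd g"
  define m where "m = fst g"
  define U where "U = (\<lambda>j. \<forall>a<n. x a j = a + 1)"
  define W where "W = (\<lambda>j. \<forall>a<n. x a j = n - a)"
  define zI where "zI = (\<forall>a<n. G (map (\<lambda>j. x a j) [0..<m]) = a + 1)"
  define zR where "zR = (\<forall>a<n. G (map (\<lambda>j. x a j) [0..<m]) = n - a)"
  have dj: "\<And>j. \<not> (U j \<and> W j)"
    unfolding U_def W_def using n2 by (metis One_nat_def Suc_1 Suc_le_lessD add.commute
        add_0 diff_zero less_Suc_eq_0_disj lessI less_imp_le_nat not_less_eq_eq plus_1_eq_Suc)
  have zdj: "\<not> (zI \<and> zR)"
    unfolding zI_def zR_def using n2 by (metis One_nat_def Suc_1 Suc_le_lessD add.commute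
        add_0 diff_zero less_Suc_eq_0_disj lessI less_imp_le_nat not_less_eq_eq plus_1_eq_Suc)
  have factA: "G (map (\<lambda>j. if U j then 1 else 0) [0..<m]) = (if zI then 1 else 0)"
  proof -
    have XA: "\<And>i a b. i < fst g \<Longrightarrow> a < n \<Longrightarrow> b < n \<Longrightarrow> (\<lambda>i (a::nat) (b::nat). x a i) i a b \<in> {0..<Suc n}"
      using xA' by simp
    have "snd g (map (\<lambda>i. Tv n ((\<lambda>i (a::nat) (b::nat). x a i) i)) [0..<fst g])
       = Tv n (\<lambda>a b. snd g (map (\<lambda>i. (\<lambda>i (a::nat) (b::nat). x a i) i a b) [0..<fst g]))"
      using inst[OF c _ XA] n2 by simp
    then show ?thesis unfolding G_def m_def U_def zI_def using n2 by (simp add: Tv_row)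
  qed
  have factB: "G (map (\<lambda>j. if W j then 1 else 0) [0..<m]) = (if zR then 1 else 0)"
  proof -
    have XA: "\<And>i a b. i < fst g \<Longrightarrow> a < n \<Longrightarrow> b < n \<Longrightarrow> (\<lambda>i (a::nat) (b::nat). x (n - 1 - a) i) i a b \<in> {0..<Suc n}"
      using xA' by simp
    have "snd g (map (\<lambda>i. Tv n ((\<lambda>i (a::nat) (b::nat). x (n - 1 - a) i) i)) [0..<fst g])
       = Tv n (\<lambda>a b. snd g (map (\<lambda>i. (\<lambda>i (a::nat) (b::nat). x (n - 1 - a) i) i a b) [0..<fst g]))"
      using inst[OF c _ XA] n2 by simp
    then have "G (map (\<lambda>i. if \<forall>a<n. x (n - 1 - a) i = a + 1 then 1 else 0) [0..<m])
       = (if \<forall>a<n. G (map (\<lambda>j. x (n - 1 - a) j) [0..<m]) = a + 1 then 1 else 0)"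
      unfolding G_def m_def using n2 by (simp add: Tv_row)
    then show ?thesis unfolding U_def W_def zR_def
      using rev_idx[of n "\<lambda>a. G (map (\<lambda>j. x a j) [0..<m])"]
        rev_idx[of n "\<lambda>a. x a i" for i] by simp
  qed
  have lhs: "snd (opf n) (map (\<lambda>i. snd g (map (\<lambda>j. x i j) [0..<fst g])) [0..<fst (opf n)])
      = (if zI \<or> zR then 1 else 0)"
    unfolding opf_def zI_def zR_def G_def m_def by (simp only: fst_conv snd_conv map_I map_R map_map o_def)
  have rhs: "snd g (map (\<lambda>j. snd (opf n) (map (\<lambda>i. x i j) [0..<fst (opf n)])) [0..<fst g])
      = G (map (\<lambda>j. if U j \<or> W j then 1 else 0) [0..<m])"
    unfolding opf_def U_def W_def G_def m_def by (simp only: fst_conv snd_conv map_I map_R)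
  have "G (map (\<lambda>j. if U j \<or> W j then 1 else 0) [0..<m]) = (if zI \<or> zR then 1 else 0)"
  proof (cases zI)
    case True
    then show ?thesis using lemE[OF c n2, of U W] factA unfolding G_def m_def by simp
  next
    case nI: False
    show ?thesis
    proof (cases zR)
      case True
      then have "G (map (\<lambda>j. if W j \<or> U j then 1 else 0) [0..<m]) = 1"
        using lemE[OF c n2, of W U] factB unfolding G_def m_def by simp
      moreover have "(\<lambda>j. if W j \<or> U j then 1 else (0::nat)) = (\<lambda>j. if U j \<or> W j then 1 else 0)"
        by auto
      ultimately show ?thesis using True by simp
    next
      case False
      then show ?thesis using lemD[OF c n2, of U W] factA factB dj nI unfolding G_def m_def by simp
    qed
  qed
  then show "snd (opf n) (map (\<lambda>i. snd g (map (\<lambda>j. x i j) [0..<fst g])) [0..<fst (opf n)])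
      = snd g (map (\<lambda>j. snd (opf n) (map (\<lambda>i. x i j) [0..<fst (opf n)])) [0..<fst g])"
    using lhs rhs by simp
qed


definition Rel :: "nat \<Rightarrow> nat \<Rightarrow> nat \<Rightarrow> bool" where
  "Rel n p q \<longleftrightarrow> \<not> (p = 1 \<and> q = 1) \<and> \<not> (p = n \<and> q = n)"

lemma T_val: "snd (opT n) u \<le> 1" by (simp add: opT_def)

lemma T_one:
  assumes "snd (opT n) u = 1" "0 < n"
  shows "u ! ((n - 1) * n + (n - 1)) = n"
proof -
  have l: "n - 1 < n" using assms by simp
  have "(\<forall>i<n. \<forall>j<n. u!(i*n+j) = i+1) \<or> (\<forall>i<n. \<forall>j<n. u!(i*n+j) = j+1)"
    using assms(1) by (simp add: opT_def split: if_splits)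
  then have "u!((n-1)*n+(n-1)) = n-1+1" using l by blast
  then show ?thesis using assms(2) by simp
qed

lemma inv:
  assumes "x \<in> clone_terms A {opT n}" "n \<ge> 2"
  shows "\<forall>u v. length u = fst x \<and> length v = fst x \<and> (\<forall>p<fst x. Rel n (u!p) (v!p))
           \<longrightarrow> Rel n (snd x u) (snd x v)"
  using assms
proof (induction x rule: clone_terms.induct)
  case (proj m i)
  then show ?case by simp
next
  case (base f)
  then have f: "f = opT n" by simp
  show ?case
  proof (intro allI impI)
    fix u v assume uv: "length u = fst f \<and> length v = fst f \<and> (\<forall>p<fst f. Rel n (u!p) (v!p))"
    show "Rel n (snd f u) (snd f v)"
    proof (rule ccontr)
      assume nr: "\<not> Rel n (snd f u) (snd f v)"
      have "snd f u \<le> 1" "snd f v \<le> 1" using f T_val by auto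
      then have "snd f u = 1" "snd f v = 1" using nr base.prems unfolding Rel_def by auto
      then have "u ! ((n - 1) * n + (n - 1)) = n" "v ! ((n - 1) * n + (n - 1)) = n"
        using f T_one base.prems by auto
      moreover have "(n - 1) * n + (n - 1) < fst f" using f idx_lt[of "n-1" n "n-1"] base.prems
        by (simp add: opT_def)
      ultimately show False using uv base.prems unfolding Rel_def by force
    qed
  qed
next
  case (comp k h gs m)
  show ?case
  proof (intro allI impI)
    fix u v assume uv: "length u = fst (m, \<lambda>xs. h (map (\<lambda>g. g xs) gs)) \<and> length v = fst (m, \<lambda>xs. h (map (\<lambda>g. g xs) gs))
        \<and> (\<forall>p<fst (m, \<lambda>xs. h (map (\<lambda>g. g xs) gs)). Rel n (u!p) (v!p))"
    have "\<forall>p<k. Rel n ((gs!p) u) ((gs!p) v)"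
    proof (intro allI impI)
      fix p assume "p < k"
      then have "gs ! p \<in> set gs" using comp.hyps by simp
      then show "Rel n ((gs!p) u) ((gs!p) v)" using comp.IH comp.prems uv by auto
    qed
    then show "Rel n (snd (m, \<lambda>xs. h (map (\<lambda>g. g xs) gs)) u) (snd (m, \<lambda>xs. h (map (\<lambda>g. g xs) gs)) v)"
      using comp.IH comp.hyps comp.prems by simp
  qed
qed

theorem corollary3p14:
  fixes k :: nat
  assumes "k \<ge> 3"
  shows "opf (k - 1) \<in> centraliser {0..<k} (centraliser {0..<k} {opT (k - 1)})
       \<and> \<not> in_clone {0..<k} (opf (k - 1)) {opT (k - 1)}"
proof -
  obtain n where kn: "k = Suc n" using assms by (cases k) auto
  have n2: "n \<ge> 2" using assms kn by simp
  have nk: "k - 1 = n" using kn by simp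
  have part1: "opf n \<in> centraliser {0..<Suc n} (centraliser {0..<Suc n} {opT n})"
  proof -
    have "is_op {0..<Suc n} (opf n)" unfolding is_op_def opf_def using n2 by auto
    moreover have "\<forall>g\<in>centraliser {0..<Suc n} {opT n}. commutes {0..<Suc n} (opf n) g"
      using comm_f[OF n2] unfolding centraliser_def by blast
    ultimately show ?thesis unfolding centraliser_def by blast
  qed
  have part2: "\<not> in_clone {0..<Suc n} (opf n) {opT n}"
  proof
    assume "in_clone {0..<Suc n} (opf n) {opT n}"
    then obtain g where g: "(n, g) \<in> clone_terms {0..<Suc n} {opT n}"
      and ag: "\<And>xs. length xs = n \<and> set xs \<subseteq> {0..<Suc n} \<Longrightarrow> snd (opf n) xs = g xs"
      unfolding in_clone_def opf_def by auto
    define I where "I = [1..<n+1]"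
    define R where "R = rev [1..<n+1]"
    have "snd (opf n) I = 1" "snd (opf n) R = 1" unfolding opf_def I_def R_def by auto
    moreover have "set I \<subseteq> {0..<Suc n}" "set R \<subseteq> {0..<Suc n}" "length I = n" "length R = n"
      unfolding I_def R_def by auto
    ultimately have gI: "g I = 1" "g R = 1" using ag by auto
    have "\<forall>p<n. Rel n (I!p) (R!p)"
    proof (intro allI impI)
      fix p assume "p < n"
      then have "I ! p = p + 1" "R ! p = n - p" unfolding I_def R_def
        by (simp_all add: rev_nth nth_upt del: upt_Suc)
      then show "Rel n (I!p) (R!p)" unfolding Rel_def using \<open>p < n\<close> n2 by auto
    qed
    then have "Rel n (g I) (g R)" using inv[OF g n2] \<open>length I = n\<close> \<open>length R = n\<close> by auto
    then show False using gI unfolding Rel_def by simp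
  qed
  show ?thesis using part1 part2 kn by simp
qed

end
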